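(* Let $\Gamma:\mathbb{C}^n\to\mathbb{C}^n$ be a homogeneous quadratic polynomial map with real coefficients such that $(x,\Gamma(x))=0$ and $(\Gamma(x),\Gamma(x))=0$ for all $x\in C$. Then there exists a germ of diffeomorphism $\Phi:(\mathbb{R}^n,0)\to(\mathbb{R}^n,0)$ with $d_0\Phi=\mathrm{id}$ and $\Phi(x)=x+\Gamma(x)+O(|x|^3)$ (i.e. $\Phi_2=\Gamma$) such that for every straight line $L$ through $0$ the image under $\Phi$ of some neighborhood of $0$ in $L$ is contained in a circle.
   Context: A *circle* in $\mathbb{R}^n$ means either a round Euclidean circle or a straight line. $(\cdot,\cdot)$ denotes the standard Euclidean inner product on $\mathbb{R}^n$, extended to $\mathbb{C}^n$ complex-bilinearly, and the *asymptotic cone* is $C=\{x\in\mathbb{C}^n:(x,x)=0\}$. For a smooth germ $\Phi$ with $\Phi(0)=0$, $d_0\Phi=\mathrm{id}$, $\Phi_2$ denotes the homogeneous quadratic part of its Taylor expansion. *)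

theory Defs
  imports "HOL-Analysis.Analysis"
begin

text \<open>C-infinity smoothness on a set U (meant for open U): f is Frechet differentiable
  at every point of U and every directional derivative x -> f'(x) v is again smooth on U.
  (Differentiability of all derivatives implies their continuity, so this is C-infinity.)\<close>
coinductive smooth_on :: "'a::real_normed_vector set \<Rightarrow> ('a \<Rightarrow> 'b::real_normed_vector) \<Rightarrow> bool"
  where "(\<And>x. x \<in> U \<Longrightarrow> (f has_derivative f' x) (at x))
         \<Longrightarrow> (\<And>v. smooth_on U (\<lambda>x. f' x v)) \<Longrightarrow> smooth_on U f"

definition quad_real :: "('n::finite \<Rightarrow> 'n \<Rightarrow> 'n \<Rightarrow> real) \<Rightarrow> real^'n \<Rightarrow> real^'n" where
  "quad_real a x = (\<chi> k. \<Sum>i\<in>UNIV. \<Sum>j\<in>UNIV. a k i j * x$i * x$j)"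

definition quad_complex :: "('n::finite \<Rightarrow> 'n \<Rightarrow> 'n \<Rightarrow> real) \<Rightarrow> complex^'n \<Rightarrow> complex^'n" where
  "quad_complex a x = (\<chi> k. \<Sum>i\<in>UNIV. \<Sum>j\<in>UNIV. complex_of_real (a k i j) * x$i * x$j)"

definition cbil :: "complex^'n::finite \<Rightarrow> complex^'n \<Rightarrow> complex" where
  "cbil x y = (\<Sum>i\<in>UNIV. x$i * y$i)"

text \<open>A circle: a round Euclidean circle or a straight line.\<close>
definition is_circle :: "(real^'n::finite) set \<Rightarrow> bool" where
  "is_circle S \<longleftrightarrow>
     (\<exists>p u w r. norm u = 1 \<and> norm w = 1 \<and> u \<bullet> w = 0 \<and> r > 0 \<and>
        S = {p + (r * cos t) *\<^sub>R u + (r * sin t) *\<^sub>R w | t. True})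
   \<or> (\<exists>p v. v \<noteq> 0 \<and> S = {p + t *\<^sub>R v | t. True})"
end

theory Submission
  imports Defs
begin


lemma smooth_coind:
  fixes f :: "'a::real_normed_vector \<Rightarrow> 'b::real_normed_vector"
  assumes "P f"
    and step: "\<And>g. P g \<Longrightarrow> \<exists>g'. (\<forall>x\<in>U. (g has_derivative g' x) (at x)) \<and>
                 (\<forall>v. P (\<lambda>x. g' x v) \<or> smooth_on U (\<lambda>x. g' x v))"
  shows "smooth_on U f"
  using assms(1)
proof (coinduction arbitrary: f rule: smooth_on.coinduct)
  case (smooth_on f)
  from step[OF this] obtain g' where "\<forall>x\<in>U. (f has_derivative g' x) (at x)"
     "\<forall>v. P (\<lambda>x. g' x v) \<or> smooth_on U (\<lambda>x. g' x v)" by blast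
  then show ?case by blast
qed

lemma smooth_const: "smooth_on U (\<lambda>x. c)"
  by (rule smooth_coind[where P="\<lambda>g. \<exists>c. g = (\<lambda>x. c)"]) (auto intro!: exI[of _ "\<lambda>x v. 0"])


lemma smooth_D:
  assumes "smooth_on U f"
  shows "\<exists>f'. (\<forall>x\<in>U. (f has_derivative f' x) (at x)) \<and> (\<forall>v. smooth_on U (\<lambda>x. f' x v))"
  using assms by (cases rule: smooth_on.cases) blast

lemma smooth_linear:
  assumes "bounded_linear L"
  shows "smooth_on U L"
  by (rule smooth_coind[where P="\<lambda>g. g = L"])
     (use assms in \<open>auto intro!: exI[of _ "\<lambda>x. L"] bounded_linear.has_derivative[OF assms] smooth_const\<close>)

lemma smooth_comp_linear:
  assumes "smooth_on U F" "bounded_linear L"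
  shows "smooth_on U (\<lambda>x. L (F x))"
proof (rule smooth_coind[where P="\<lambda>h. \<exists>F. smooth_on U F \<and> h = (\<lambda>x. L (F x))"])
  fix g assume "\<exists>F. smooth_on U F \<and> g = (\<lambda>x. L (F x))"
  then obtain F where F: "smooth_on U F" "g = (\<lambda>x. L (F x))" by blast
  from smooth_D[OF F(1)] obtain F' where F': "\<forall>x\<in>U. (F has_derivative F' x) (at x)"
    "\<forall>v. smooth_on U (\<lambda>x. F' x v)" by blast
  show "\<exists>g'. (\<forall>x\<in>U. (g has_derivative g' x) (at x)) \<and>
          (\<forall>v. (\<exists>F. smooth_on U F \<and> (\<lambda>x. g' x v) = (\<lambda>x. L (F x))) \<or> smooth_on U (\<lambda>x. g' x v))"
    apply (rule exI[of _ "\<lambda>x v. L (F' x v)"])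
    using F' F(2) by (auto intro: bounded_linear.has_derivative[OF assms(2)])
qed (use assms in auto)

inductive gen :: "'a::real_normed_vector set \<Rightarrow> ('a \<Rightarrow> 'b::real_normed_vector) \<Rightarrow> bool" for U where
  gen_prod: "smooth_on U (f::'a\<Rightarrow>real) \<Longrightarrow> smooth_on U g \<Longrightarrow> gen U (\<lambda>x. f x *\<^sub>R g x)"
| gen_add: "gen U h1 \<Longrightarrow> gen U h2 \<Longrightarrow> gen U (\<lambda>x. h1 x + h2 x)"

lemma gen_step:
  assumes "gen U h"
  shows "\<exists>h'. (\<forall>x\<in>U. (h has_derivative h' x) (at x)) \<and> (\<forall>v. gen U (\<lambda>x. h' x v))"
  using assms
proof induction
  case (gen_prod f g)
  from smooth_D[OF gen_prod(1)] obtain f' where f': "\<forall>x\<in>U. (f has_derivative f' x) (at x)"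
    "\<forall>v. smooth_on U (\<lambda>x. f' x v)" by blast
  from smooth_D[OF gen_prod(2)] obtain g' where g': "\<forall>x\<in>U. (g has_derivative g' x) (at x)"
    "\<forall>v. smooth_on U (\<lambda>x. g' x v)" by blast
  show ?case
    apply (rule exI[of _ "\<lambda>x v. f x *\<^sub>R g' x v + f' x v *\<^sub>R g x"])
    using f' g' gen_prod by (auto intro!: has_derivative_scaleR gen.intros)
next
  case (gen_add h1 h2)
  then obtain h1' h2' where "\<forall>x\<in>U. (h1 has_derivative h1' x) (at x)" "\<forall>v. gen U (\<lambda>x. h1' x v)"
    "\<forall>x\<in>U. (h2 has_derivative h2' x) (at x)" "\<forall>v. gen U (\<lambda>x. h2' x v)" by blast
  then show ?case
    by (auto intro!: exI[of _ "\<lambda>x v. h1' x v + h2' x v"] has_derivative_add gen.intros)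
qed

lemma smooth_gen: "gen U h \<Longrightarrow> smooth_on U h"
  by (rule smooth_coind[where P="gen U"]) (assumption, drule gen_step, blast)

lemma smooth_scaleR:
  "smooth_on U (f::_\<Rightarrow>real) \<Longrightarrow> smooth_on U g \<Longrightarrow> smooth_on U (\<lambda>x. f x *\<^sub>R g x)"
  by (rule smooth_gen) (rule gen_prod)

lemma smooth_add:
  assumes "smooth_on U f" "smooth_on U g" shows "smooth_on U (\<lambda>x. f x + g x)"
proof -
  have "gen U (\<lambda>x. (\<lambda>x. 1::real) x *\<^sub>R f x + (\<lambda>x. 1::real) x *\<^sub>R g x)"
    by (intro gen.intros smooth_const assms)
  then show ?thesis by (auto dest: smooth_gen)
qed

lemma smooth_mult:
  "smooth_on U (f::_\<Rightarrow>real) \<Longrightarrow> smooth_on U g \<Longrightarrow> smooth_on U (\<lambda>x. f x * g x)"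
  using smooth_scaleR[of U f g] by simp

lemma smooth_minus:
  assumes "smooth_on U f" shows "smooth_on U (\<lambda>x. - f x)"
  using smooth_comp_linear[OF assms, of uminus] by (simp add: bounded_linear_minus[OF bounded_linear_ident])

lemma smooth_diff:
  assumes "smooth_on U f" "smooth_on U g" shows "smooth_on U (\<lambda>x. f x - g x)"
  using smooth_add[OF assms(1) smooth_minus[OF assms(2)]] by simp

lemma smooth_sum:
  assumes "finite S" "\<And>i. i \<in> S \<Longrightarrow> smooth_on U (f i)"
  shows "smooth_on U (\<lambda>x. \<Sum>i\<in>S. f i x)"
  using assms by (induction S rule: finite_induct) (auto intro!: smooth_add smooth_const)

lemma smooth_prod:
  fixes f :: "_ \<Rightarrow> _ \<Rightarrow> real"
  assumes "finite S" "\<And>i. i \<in> S \<Longrightarrow> smooth_on U (f i)"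
  shows "smooth_on U (\<lambda>x. \<Prod>i\<in>S. f i x)"
  using assms by (induction S rule: finite_induct) (auto intro!: smooth_mult smooth_const)

lemma smooth_inverse:
  fixes D :: "_ \<Rightarrow> real"
  assumes D: "smooth_on U D" and nz: "\<And>x. x \<in> U \<Longrightarrow> D x \<noteq> 0"
  shows "smooth_on U (\<lambda>x. inverse (D x))"
proof (rule smooth_coind[where P="\<lambda>h. \<exists>g k. smooth_on U g \<and> h = (\<lambda>x. g x * inverse (D x) ^ k)"])
  show "\<exists>g k. smooth_on U g \<and> (\<lambda>x. inverse (D x)) = (\<lambda>x. g x * inverse (D x) ^ k)"
    by (rule exI[of _ "\<lambda>x. 1"], rule exI[of _ 1]) (simp add: smooth_const)
next
  fix h assume "\<exists>g k. smooth_on U g \<and> h = (\<lambda>x. g x * inverse (D x) ^ k)"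
  then obtain g k where g: "smooth_on U g" and h: "h = (\<lambda>x. g x * inverse (D x) ^ k)" by blast
  from smooth_D[OF g] obtain g' where g': "\<forall>x\<in>U. (g has_derivative g' x) (at x)"
    "\<forall>v. smooth_on U (\<lambda>x. g' x v)" by blast
  from smooth_D[OF D] obtain D' where D': "\<forall>x\<in>U. (D has_derivative D' x) (at x)"
    "\<forall>v. smooth_on U (\<lambda>x. D' x v)" by blast
  define h' where "h' = (\<lambda>x v. (g' x v * D x - real k * g x * D' x v) * inverse (D x) ^ (Suc k))"
  have "(h has_derivative h' x) (at x)" if x: "x \<in> U" for x
  proof -
    have "((\<lambda>x. g x * inverse (D x) ^ k) has_derivative
       (\<lambda>v. g x * (of_nat k * (- (inverse (D x) * D' x v * inverse (D x))) * inverse (D x) ^ (k - 1))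
            + g' x v * inverse (D x) ^ k)) (at x)"
      by (rule has_derivative_mult[OF g'(1)[rule_format, OF x]
         has_derivative_power[OF Deriv.has_derivative_inverse[OF nz[OF x] D'(1)[rule_format, OF x]]]])
    moreover have "(\<lambda>v. g x * (of_nat k * (- (inverse (D x) * D' x v * inverse (D x))) * inverse (D x) ^ (k - 1))
            + g' x v * inverse (D x) ^ k) = h' x"
    proof
      fix v
      show "g x * (of_nat k * (- (inverse (D x) * D' x v * inverse (D x))) * inverse (D x) ^ (k - 1))
            + g' x v * inverse (D x) ^ k = h' x v"
        using nz[OF x] unfolding h'_def
        by (cases k) (auto simp: field_simps)
    qed
    ultimately show ?thesis unfolding h by simp
  qed
  moreover have sm: "smooth_on U (\<lambda>x. g' x v * D x - real k * g x * D' x v)" for v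
    by (intro smooth_diff smooth_mult smooth_const g g'(2)[rule_format] D D'(2)[rule_format])
  ultimately show "\<exists>h'. (\<forall>x\<in>U. (h has_derivative h' x) (at x)) \<and>
          (\<forall>v. (\<exists>g k. smooth_on U g \<and> (\<lambda>x. h' x v) = (\<lambda>x. g x * inverse (D x) ^ k)) \<or> smooth_on U (\<lambda>x. h' x v))"
  proof (intro exI[of _ h'] conjI ballI allI disjI1)
    fix v
    show "\<exists>ga ka. smooth_on U ga \<and> (\<lambda>x. h' x v) = (\<lambda>x. ga x * inverse (D x) ^ ka)"
      by (rule exI[of _ "\<lambda>x. g' x v * D x - real k * g x * D' x v"], rule exI[of _ "Suc k"])
         (simp add: h'_def sm)
  qed
qed



lemma basis_expansion_R: "(\<Sum>i\<in>UNIV. (x::real^'n) $ i *\<^sub>R axis i 1) = x"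
  using basis_expansion[of x] by (simp add: scalar_mult_eq_scaleR)

lemma smooth_subset:
  assumes "smooth_on U f" "V \<subseteq> U" shows "smooth_on V f"
proof (rule smooth_coind[where P="smooth_on U"])
  fix g assume "smooth_on U g"
  from smooth_D[OF this] obtain g' where "\<forall>x\<in>U. (g has_derivative g' x) (at x)"
    "\<forall>v. smooth_on U (\<lambda>x. g' x v)" by blast
  then show "\<exists>g'. (\<forall>x\<in>V. (g has_derivative g' x) (at x)) \<and>
                 (\<forall>v. smooth_on U (\<lambda>x. g' x v) \<or> smooth_on V (\<lambda>x. g' x v))"
    using assms(2) by blast
qed (rule assms(1))

lemma smooth_cong:
  assumes "smooth_on U f" "open U" "\<And>x. x \<in> U \<Longrightarrow> f x = g x"
  shows "smooth_on U g"
proof (rule smooth_coind[where P="\<lambda>h. h = g"])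
  fix h assume "h = g"
  from smooth_D[OF assms(1)] obtain f' where f': "\<forall>x\<in>U. (f has_derivative f' x) (at x)"
    "\<forall>v. smooth_on U (\<lambda>x. f' x v)" by blast
  have "(g has_derivative f' x) (at x)" if "x \<in> U" for x
    using has_derivative_transform_within_open[OF f'(1)[rule_format, OF that] assms(2) that] assms(3) by blast
  then show "\<exists>g'. (\<forall>x\<in>U. (h has_derivative g' x) (at x)) \<and> (\<forall>v. (\<lambda>x. g' x v) = g \<or> smooth_on U (\<lambda>x. g' x v))"
    using f' \<open>h = g\<close> by blast
qed simp

lemma smooth_nth: "smooth_on U F \<Longrightarrow> smooth_on U (\<lambda>x. F x $ k)"
  by (rule smooth_comp_linear[where L="\<lambda>y. y $ k"]) (auto intro: bounded_linear_vec_nth)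

lemma smooth_coord: "smooth_on U (\<lambda>x. x $ k)"
  by (rule smooth_linear) (rule bounded_linear_vec_nth)

lemma smooth_vec:
  assumes "\<And>k. smooth_on U (\<lambda>x. f k x :: real)"
  shows "smooth_on U (\<lambda>x. (\<chi> k. f k x) :: real^'n)"
proof -
  have "smooth_on U (\<lambda>x. \<Sum>k\<in>UNIV. f k x *\<^sub>R (axis k 1 :: real^'n))"
    by (intro smooth_sum smooth_scaleR assms smooth_const) auto
  moreover have "(\<Sum>k\<in>UNIV. f k x *\<^sub>R (axis k 1 :: real^'n)) = (\<chi> k. f k x)" for x
    using basis_expansion_R[of "(\<chi> k. f k x) :: real^'n"] by simp
  ultimately show ?thesis by simp
qed

lemma smooth_continuous:
  assumes "smooth_on U f" shows "continuous_on U f"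
proof -
  from smooth_D[OF assms] obtain f' where "\<forall>x\<in>U. (f has_derivative f' x) (at x)" by blast
  then show ?thesis by (intro continuous_at_imp_continuous_on) (auto intro: has_derivative_continuous)
qed

lemma smooth_det:
  fixes A :: "_ \<Rightarrow> real^'n^'n"
  assumes "\<And>i j. smooth_on U (\<lambda>x. A x $ i $ j)"
  shows "smooth_on U (\<lambda>x. det (A x))"
  unfolding det_def
  by (intro smooth_sum smooth_mult smooth_const smooth_prod assms) (auto intro: finite_permutations)

lemma smooth_divide:
  fixes g D :: "_ \<Rightarrow> real"
  assumes "smooth_on U g" "smooth_on U D" "\<And>x. x \<in> U \<Longrightarrow> D x \<noteq> 0"
  shows "smooth_on U (\<lambda>x. g x / D x)"
  using smooth_mult[OF assms(1) smooth_inverse[OF assms(2,3)]] by (simp add: divide_inverse)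

lemma smooth_inv_map:
  fixes \<Phi> :: "real^'n \<Rightarrow> real^'n"
  assumes sm: "smooth_on U \<Phi>" and U: "open U" and V: "open V"
    and \<Phi>': "\<And>x. x \<in> U \<Longrightarrow> (\<Phi> has_derivative \<Phi>' x) (at x)"
    and \<Phi>'s: "\<And>v. smooth_on U (\<lambda>x. \<Phi>' x v)"
    and inj: "\<And>x. x \<in> U \<Longrightarrow> inj (\<Phi>' x)"
    and \<Psi>U: "\<And>y. y \<in> V \<Longrightarrow> \<Psi> y \<in> U"
    and G: "\<And>y. y \<in> V \<Longrightarrow> (\<Psi> has_derivative G y) (at y)"
    and GI: "\<And>y w. y \<in> V \<Longrightarrow> \<Phi>' (\<Psi> y) (G y w) = w"
  shows "smooth_on V \<Psi>"
proof -
  define M where "M x = matrix (\<Phi>' x)" for x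
  define Minv where "Minv x v = (\<chi> k. det (\<chi> i j. if j = k then v $ i else M x $ i $ j) / det (M x))" for x v
  have lin: "linear (\<Phi>' x)" if "x \<in> U" for x
    using \<Phi>'[OF that] by (simp add: has_derivative_def bounded_linear.linear)
  have detnz: "det (M x) \<noteq> 0" if "x \<in> U" for x
    unfolding M_def using det_nz_iff_inj[OF lin[OF that]] inj[OF that] by simp
  have Msm: "smooth_on U (\<lambda>x. M x $ i $ j)" for i j
    unfolding M_def matrix_def by (simp add: smooth_nth \<Phi>'s)
  have Msm2: "smooth_on U (\<lambda>x. if j = k then v $ i else M x $ i $ j)" for i j k v
    by (cases "j = k") (simp_all add: Msm smooth_const)
  have Minvsm: "smooth_on U (\<lambda>x. Minv x v $ k)" for v k
  proof -
    have d1: "smooth_on U (\<lambda>x. det (M x))" by (rule smooth_det) (rule Msm)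
    have d2: "smooth_on U (\<lambda>x. det (\<chi> i j. if j = k then v $ i else M x $ i $ j))"
      by (rule smooth_det) (simp only: vec_lambda_beta Msm2)
    show ?thesis unfolding Minv_def vec_lambda_beta
      by (rule smooth_divide[OF d2 d1 detnz])
  qed
  have GM: "G y w = Minv (\<Psi> y) w" if "y \<in> V" for y w
  proof -
    have "M (\<Psi> y) *v G y w = w"
      unfolding M_def using matrix_vector_mul(2)[OF lin[OF \<Psi>U[OF that]]] GI[OF that] by simp
    then show ?thesis
      unfolding Minv_def using cramer[OF detnz[OF \<Psi>U[OF that]]] by blast
  qed
  have main: "smooth_on V (\<lambda>y. F (\<Psi> y))" if "smooth_on U F" for F :: "real^'n \<Rightarrow> real^'n"
  proof (rule smooth_coind[where P="\<lambda>h. \<exists>F. smooth_on U F \<and> (\<forall>y\<in>V. h y = F (\<Psi> y))"])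
    show "\<exists>Fa. smooth_on U Fa \<and> (\<forall>y\<in>V. F (\<Psi> y) = Fa (\<Psi> y))" using that by blast
  next
    fix h assume "\<exists>F. smooth_on U F \<and> (\<forall>y\<in>V. h y = F (\<Psi> y))"
    then obtain F where F: "smooth_on U F" and h: "\<And>y. y \<in> V \<Longrightarrow> h y = F (\<Psi> y)" by blast
    from smooth_D[OF F] obtain F' where F': "\<forall>x\<in>U. (F has_derivative F' x) (at x)"
      "\<forall>v. smooth_on U (\<lambda>x. F' x v)" by blast
    define h' where "h' y v = F' (\<Psi> y) (G y v)" for y v
    have "(h has_derivative h' y) (at y)" if "y \<in> V" for y
    proof -
      have "((\<lambda>y. F (\<Psi> y)) has_derivative h' y) (at y)"
        unfolding h'_def
        using diff_chain_at[OF G[OF that] F'(1)[rule_format, OF \<Psi>U[OF that]]] by (simp add: o_def)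
      then show ?thesis
        by (rule has_derivative_transform_within_open[OF _ V that]) (auto simp: h)
    qed
    moreover have "\<exists>F2. smooth_on U F2 \<and> (\<forall>y\<in>V. h' y v = F2 (\<Psi> y))" for v
    proof -
      define F2 where "F2 x = F' x (Minv x v)" for x
      have c1: "smooth_on U (\<lambda>x. \<Sum>k\<in>UNIV. Minv x v $ k *\<^sub>R F' x (axis k 1))"
        by (intro smooth_sum smooth_scaleR Minvsm F'(2)[rule_format]) auto
      have c2: "(\<Sum>k\<in>UNIV. Minv x v $ k *\<^sub>R F' x (axis k 1)) = F2 x" if "x \<in> U" for x
      proof -
        have bl: "linear (F' x)" using F'(1) that by (simp add: has_derivative_def bounded_linear.linear)
        have "F2 x = F' x (\<Sum>k\<in>UNIV. Minv x v $ k *\<^sub>R axis k 1)"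
          unfolding F2_def basis_expansion_R ..
        also have "\<dots> = (\<Sum>k\<in>UNIV. Minv x v $ k *\<^sub>R F' x (axis k 1))"
          by (simp add: linear_sum[OF bl] linear_scale[OF bl])
        finally show ?thesis by simp
      qed
      have "smooth_on U F2" using smooth_cong[OF c1 U c2] .
      moreover have "h' y v = F2 (\<Psi> y)" if "y \<in> V" for y
        unfolding h'_def F2_def using GM[OF that] by simp
      ultimately show ?thesis by blast
    qed
    ultimately show "\<exists>h'. (\<forall>x\<in>V. (h has_derivative h' x) (at x)) \<and>
        (\<forall>v. (\<exists>F. smooth_on U F \<and> (\<forall>y\<in>V. h' y v = F (\<Psi> y))) \<or> smooth_on V (\<lambda>x. h' x v))"
      by blast
  qed
  show ?thesis using main[OF smooth_linear[OF bounded_linear_ident]] by simp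
qed



definition F3 :: "('n::finite \<Rightarrow> 'n \<Rightarrow> 'n \<Rightarrow> real) \<Rightarrow> 'b::real_field^'n \<Rightarrow> 'b^'n \<Rightarrow> 'b^'n \<Rightarrow> 'b" where
  "F3 a x y w = (\<Sum>k\<in>UNIV. \<Sum>i\<in>UNIV. \<Sum>j\<in>UNIV. of_real (a k i j) * x$k * y$i * w$j)"

definition QQ :: "('n::finite \<Rightarrow> 'n \<Rightarrow> 'n \<Rightarrow> real) \<Rightarrow> 'n \<Rightarrow> 'b::real_field^'n \<Rightarrow> 'b^'n \<Rightarrow> 'b" where
  "QQ a k y w = (\<Sum>i\<in>UNIV. \<Sum>j\<in>UNIV. of_real (a k i j) * y$i * w$j)"

definition emb :: "real^'n::finite \<Rightarrow> complex^'n" where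
  "emb x = (\<chi> i. complex_of_real (x$i))"

lemma F3_QQ: "F3 a x y w = (\<Sum>k\<in>UNIV. x$k * QQ a k y w)"
  unfolding F3_def QQ_def by (simp add: sum_distrib_left mult.assoc mult.left_commute)

lemma F3_add1: "F3 a (x + x') y w = F3 a x y w + F3 a x' y w"
  unfolding F3_def by (simp add: algebra_simps sum.distrib)
lemma F3_add2: "F3 a x (y + y') w = F3 a x y w + F3 a x y' w"
  unfolding F3_def by (simp add: algebra_simps sum.distrib)
lemma F3_add3: "F3 a x y (w + w') = F3 a x y w + F3 a x y w'"
  unfolding F3_def by (simp add: algebra_simps sum.distrib)
lemma F3_smult1: "F3 a (c *s x) y w = c * F3 a x y w"
  unfolding F3_def by (simp add: algebra_simps sum_distrib_left)
lemma F3_smult2: "F3 a x (c *s y) w = c * F3 a x y w"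
  unfolding F3_def by (simp add: algebra_simps sum_distrib_left)
lemma F3_smult3: "F3 a x y (c *s w) = c * F3 a x y w"
  unfolding F3_def by (simp add: algebra_simps sum_distrib_left)
lemmas F3_lin = F3_add1 F3_add2 F3_add3 F3_smult1 F3_smult2 F3_smult3

lemma QQ_add1: "QQ a k (y + y') w = QQ a k y w + QQ a k y' w"
  unfolding QQ_def by (simp add: algebra_simps sum.distrib)
lemma QQ_add2: "QQ a k y (w + w') = QQ a k y w + QQ a k y w'"
  unfolding QQ_def by (simp add: algebra_simps sum.distrib)
lemma QQ_smult1: "QQ a k (c *s y) w = c * QQ a k y w"
  unfolding QQ_def by (simp add: algebra_simps sum_distrib_left)
lemma QQ_smult2: "QQ a k y (c *s w) = c * QQ a k y w"
  unfolding QQ_def by (simp add: algebra_simps sum_distrib_left)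
lemmas QQ_lin = QQ_add1 QQ_add2 QQ_smult1 QQ_smult2

lemma F3_zero: "F3 a 0 y w = 0" "F3 a x 0 w = 0" "F3 a x y 0 = 0"
  unfolding F3_def by simp_all
lemma QQ_zero: "QQ a k 0 w = 0" "QQ a k y 0 = 0"
  unfolding QQ_def by simp_all

lemma F3_expand:
  "F3 a (s *s E + U) (s *s E + U) (s *s E + U) =
     s^3 * F3 a E E E + s^2 * (F3 a E E U + F3 a E U E + F3 a U E E)
     + s * (F3 a E U U + F3 a U E U + F3 a U U E) + F3 a U U U"
  by (simp add: F3_lin algebra_simps power2_eq_square power3_eq_cube)

lemma QQ_expand:
  "QQ a k (s *s E + U) (s *s E + U) = s^2 * QQ a k E E + s * (QQ a k E U + QQ a k U E) + QQ a k U U"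
  by (simp add: QQ_lin algebra_simps power2_eq_square)

lemma cbil_quad: "cbil z (quad_complex a z) = F3 a z z z"
  unfolding cbil_def quad_complex_def F3_QQ QQ_def by simp

lemma quad_complex_nth: "quad_complex a z $ k = QQ a k z z"
  unfolding quad_complex_def QQ_def by simp

lemma quad_real_nth: "quad_real a x $ k = QQ a k x x"
  unfolding quad_real_def QQ_def by simp

lemma inner_quad_real: "x \<bullet> quad_real a x = F3 a x x x"
  unfolding inner_vec_def F3_QQ quad_real_nth by simp

lemma cbil_quad2: "cbil (quad_complex a z) (quad_complex a z) = (\<Sum>k\<in>UNIV. (QQ a k z z)^2)"
  unfolding cbil_def quad_complex_nth by (simp add: power2_eq_square)

lemma norm_quad_real: "(norm (quad_real a x))^2 = (\<Sum>k\<in>UNIV. (QQ a k x x)^2)"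
  unfolding power2_norm_eq_inner inner_vec_def quad_real_nth by (simp add: power2_eq_square)

lemma emb_add: "emb (x + y) = emb x + emb y"
  unfolding emb_def by (simp add: vec_eq_iff)

lemma F3_emb: "F3 a (emb x) (emb y) (emb w) = complex_of_real (F3 a x y w)"
  unfolding F3_def emb_def by simp

lemma QQ_emb: "QQ a k (emb y) (emb w) = complex_of_real (QQ a k y w)"
  unfolding QQ_def emb_def by simp



lemma cone_point:
  fixes u e :: "real^'n::finite"
  assumes "u $ m = 0" "e = axis m 1"
  shows "cbil ((\<i> * complex_of_real (norm u)) *s emb e + emb u) ((\<i> * complex_of_real (norm u)) *s emb e + emb u) = 0"
proof -
  let ?s = "\<i> * complex_of_real (norm u)"
  have "cbil (?s *s emb e + emb u) (?s *s emb e + emb u)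
      = (\<Sum>i\<in>UNIV. (if i = m then ?s^2 else 0) + complex_of_real ((u$i)^2))"
    unfolding cbil_def emb_def assms(2)
    by (rule sum.cong) (auto simp: axis_def assms(1) power2_eq_square algebra_simps)
  also have "\<dots> = ?s^2 + complex_of_real (\<Sum>i\<in>UNIV. (u$i)^2)"
    by (simp add: sum.distrib)
  also have "(\<Sum>i\<in>UNIV. (u$i)^2) = (norm u)^2"
    unfolding power2_norm_eq_inner inner_vec_def by (simp add: power2_eq_square)
  also have "?s^2 = - complex_of_real ((norm u)^2)" by (simp add: power_mult_distrib)
  finally show ?thesis by simp
qed

lemma decomp:
  fixes x :: "real^'n::finite" and m :: 'n
  defines "e \<equiv> axis m 1" and "u \<equiv> x - (x$m) *s axis m 1"
  shows "x = (x$m) *s e + u" "u $ m = 0" "x \<bullet> x = (x$m)^2 + u \<bullet> u"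
proof -
  show "x = (x$m) *s e + u" unfolding u_def e_def by simp
  show um: "u $ m = 0" unfolding u_def by simp
  have "x \<bullet> x = ((x$m) *s e + u) \<bullet> ((x$m) *s e + u)" using \<open>x = _\<close> by simp
  also have "\<dots> = (x$m)^2 * (e \<bullet> e) + 2 * (x$m) * (e \<bullet> u) + u \<bullet> u"
    by (simp add: scalar_mult_eq_scaleR inner_add_left inner_add_right inner_commute power2_eq_square algebra_simps)
  also have "e \<bullet> e = 1" unfolding e_def by (simp add: inner_axis_axis)
  also have "e \<bullet> u = 0" unfolding e_def using um by (simp add: inner_axis')
  finally show "x \<bullet> x = (x$m)^2 + u \<bullet> u" by simp
qed



definition hyp :: "('n::finite \<Rightarrow> 'n \<Rightarrow> 'n \<Rightarrow> real) \<Rightarrow> bool" where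
  "hyp a \<longleftrightarrow> (\<forall>x::complex^'n. cbil x x = 0 \<longrightarrow>
             cbil x (quad_complex a x) = 0 \<and> cbil (quad_complex a x) (quad_complex a x) = 0)"

lemma K1:
  fixes x :: "real^'n::finite" and m :: 'n
  assumes H: "hyp a"
  defines "e \<equiv> axis m 1" and "u \<equiv> x - (x$m) *s axis m 1"
  shows "F3 a x x x = (x \<bullet> x) * (F3 a e e e * x$m + (F3 a e e u + F3 a e u e + F3 a u e e))"
proof -
  define r where "r = norm u"
  define t where "t = x$m"
  define s where "s = \<i> * complex_of_real r"
  define A where "A = F3 a e e e"
  define B where "B = F3 a e e u + F3 a e u e + F3 a u e e"
  define C where "C = F3 a e u u + F3 a u e u + F3 a u u e"
  define D where "D = F3 a u u u"
  have xd: "x = t *s e + u" and um: "u $ m = 0" and xx: "x \<bullet> x = t^2 + u \<bullet> u"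
    using decomp[of x m] unfolding e_def u_def t_def by auto
  have uu: "u \<bullet> u = r^2" unfolding r_def by (simp add: power2_norm_eq_inner)
  have "cbil (s *s emb e + emb u) (s *s emb e + emb u) = 0"
    unfolding s_def r_def by (rule cone_point[OF um]) (simp add: e_def)
  then have "F3 a (s *s emb e + emb u) (s *s emb e + emb u) (s *s emb e + emb u) = 0"
    using H unfolding hyp_def cbil_quad by blast
  then have "s^3 * complex_of_real A + s^2 * complex_of_real B + s * complex_of_real C + complex_of_real D = 0"
    unfolding F3_expand A_def B_def C_def D_def by (simp add: F3_emb)
  moreover have "s^2 = - complex_of_real (r^2)" "s^3 = - \<i> * complex_of_real (r^3)"
    unfolding s_def by (simp_all add: power_mult_distrib power3_eq_cube algebra_simps complex_i_mult_minus)
  ultimately have ceq: "complex_of_real (D - r^2 * B) + \<i> * complex_of_real (r * C - r^3 * A) = 0"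
    by (simp add: algebra_simps, simp add: s_def algebra_simps)
  have ReI: "Re (complex_of_real p + \<i> * complex_of_real q) = p" "Im (complex_of_real p + \<i> * complex_of_real q) = q" for p q
    by simp_all
  have eqD: "D = r^2 * B" using ReI(1)[of "D - r^2 * B" "r * C - r^3 * A"] unfolding ceq by simp
  have eqC: "r * C = r^3 * A" using ReI(2)[of "D - r^2 * B" "r * C - r^3 * A"] unfolding ceq by simp
  have eqC': "C = r^2 * A"
  proof (cases "r = 0")
    case True
    then have "u = 0" unfolding r_def by simp
    then show ?thesis unfolding C_def using True by (simp add: F3_zero)
  next
    case False
    then show ?thesis using eqC by (simp add: power2_eq_square power3_eq_cube)
  qed
  have "F3 a x x x = t^3 * A + t^2 * B + t * C + D"
    unfolding A_def B_def C_def D_def by (subst xd)+ (rule F3_expand)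
  also have "\<dots> = (t^2 + r^2) * (A * t + B)" unfolding eqC' eqD by (simp add: algebra_simps power2_eq_square power3_eq_cube)
  finally show ?thesis unfolding xx uu A_def B_def t_def by simp
qed



lemma K2:
  fixes x :: "real^'n::finite" and m :: 'n
  assumes H: "hyp a"
  defines "e \<equiv> axis m 1" and "u \<equiv> x - (x$m) *s axis m 1"
  shows "(\<Sum>k\<in>UNIV. (QQ a k x x)^2) = (x \<bullet> x) *
     ((x \<bullet> x) * (\<Sum>k\<in>UNIV. (QQ a k e e)^2)
      + (\<Sum>k\<in>UNIV. (QQ a k e u + QQ a k u e)^2)
      + 2 * x$m * (\<Sum>k\<in>UNIV. QQ a k e e * (QQ a k e u + QQ a k u e))
      + 2 * (\<Sum>k\<in>UNIV. QQ a k e e * QQ a k u u)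
      - 2 * (u \<bullet> u) * (\<Sum>k\<in>UNIV. (QQ a k e e)^2))"
proof -
  define r where "r = norm u"
  define t where "t = x$m"
  define s where "s = \<i> * complex_of_real r"
  define \<alpha> where "\<alpha> k = QQ a k e e" for k
  define \<beta> where "\<beta> k = QQ a k e u + QQ a k u e" for k
  define \<gamma> where "\<gamma> k = QQ a k u u" for k
  define Sa where "Sa = (\<Sum>k\<in>UNIV. (\<alpha> k)^2)"
  define Sb where "Sb = (\<Sum>k\<in>UNIV. (\<beta> k)^2)"
  define Sg where "Sg = (\<Sum>k\<in>UNIV. (\<gamma> k)^2)"
  define Sab where "Sab = (\<Sum>k\<in>UNIV. \<alpha> k * \<beta> k)"
  define Sag where "Sag = (\<Sum>k\<in>UNIV. \<alpha> k * \<gamma> k)"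
  define Sbg where "Sbg = (\<Sum>k\<in>UNIV. \<beta> k * \<gamma> k)"
  have xd: "x = t *s e + u" and um: "u $ m = 0" and xx: "x \<bullet> x = t^2 + u \<bullet> u"
    using decomp[of x m] unfolding e_def u_def t_def by auto
  have uu: "u \<bullet> u = r^2" unfolding r_def by (simp add: power2_norm_eq_inner)
  have "cbil (s *s emb e + emb u) (s *s emb e + emb u) = 0"
    unfolding s_def r_def by (rule cone_point[OF um]) (simp add: e_def)
  then have "(\<Sum>k\<in>UNIV. (QQ a k (s *s emb e + emb u) (s *s emb e + emb u))^2) = 0"
    using H unfolding hyp_def cbil_quad2 by blast
  moreover have "QQ a k (s *s emb e + emb u) (s *s emb e + emb u)
      = complex_of_real (\<gamma> k - r^2 * \<alpha> k) + \<i> * complex_of_real (r * \<beta> k)" for k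
  proof -
    have s2: "s^2 = - complex_of_real (r^2)" unfolding s_def by (simp add: power_mult_distrib)
    show ?thesis
      unfolding QQ_expand \<alpha>_def \<beta>_def \<gamma>_def QQ_emb s2
      by (simp add: algebra_simps s_def)
  qed
  ultimately have ceq: "(\<Sum>k\<in>UNIV. (complex_of_real (\<gamma> k - r^2 * \<alpha> k) + \<i> * complex_of_real (r * \<beta> k))^2) = 0"
    by simp
  have ReI: "Re ((complex_of_real p + \<i> * complex_of_real q)^2) = p^2 - q^2"
            "Im ((complex_of_real p + \<i> * complex_of_real q)^2) = 2 * p * q" for p q
    by (simp_all add: power2_eq_square)
  have R1: "(\<Sum>k\<in>UNIV. (\<gamma> k - r^2 * \<alpha> k)^2 - (r * \<beta> k)^2) = 0"
    using arg_cong[where f=Re, OF ceq] unfolding Re_sum ReI by simp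
  have R2: "(\<Sum>k\<in>UNIV. 2 * (\<gamma> k - r^2 * \<alpha> k) * (r * \<beta> k)) = 0"
    using arg_cong[where f=Im, OF ceq] unfolding Im_sum ReI by simp
  have E1: "(\<Sum>k\<in>UNIV. (\<gamma> k - r^2 * \<alpha> k)^2 - (r * \<beta> k)^2) = Sg - 2 * r^2 * Sag + r^4 * Sa - r^2 * Sb"
    unfolding Sg_def Sag_def Sa_def Sb_def
    by (simp add: power2_eq_square power4_eq_xxxx algebra_simps sum.distrib sum_distrib_left sum_subtractf)
  have E2: "(\<Sum>k\<in>UNIV. 2 * (\<gamma> k - r^2 * \<alpha> k) * (r * \<beta> k)) = 2 * r * (Sbg - r^2 * Sab)"
    unfolding Sbg_def Sab_def
    by (simp add: power2_eq_square power4_eq_xxxx algebra_simps sum.distrib sum_distrib_left sum_subtractf)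
  have QQx: "QQ a k x x = t^2 * \<alpha> k + t * \<beta> k + \<gamma> k" for k
    unfolding \<alpha>_def \<beta>_def \<gamma>_def by (subst xd)+ (rule QQ_expand)
  have E3: "(\<Sum>k\<in>UNIV. (QQ a k x x)^2) = t^4 * Sa + t^2 * Sb + Sg + 2 * t^3 * Sab + 2 * t^2 * Sag + 2 * t * Sbg"
    unfolding QQx Sg_def Sag_def Sa_def Sb_def Sab_def Sbg_def
    by (simp add: power2_eq_square power3_eq_cube power4_eq_xxxx algebra_simps sum.distrib sum_distrib_left)
  have F1: "Sg - 2 * r^2 * Sag + r^4 * Sa - r^2 * Sb = 0" using R1 E1 by simp
  have F2: "Sbg = r^2 * Sab"
  proof (cases "r = 0")
    case True
    then have "u = 0" unfolding r_def by simp
    then show ?thesis unfolding Sbg_def \<beta>_def using True by (simp add: QQ_zero)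
  next
    case False
    then show ?thesis using R2 E2 by simp
  qed
  have "(\<Sum>k\<in>UNIV. (QQ a k x x)^2) = (t^2 + r^2) * ((t^2 + r^2) * Sa + Sb + 2 * t * Sab + 2 * Sag - 2 * r^2 * Sa)"
    unfolding E3 using F1 F2
    by (simp add: power2_eq_square power3_eq_cube power4_eq_xxxx algebra_simps)
  then show ?thesis
    unfolding xx uu Sa_def Sb_def Sab_def Sag_def \<alpha>_def \<beta>_def \<gamma>_def t_def by simp
qed



lemma circle_lemma:
  fixes v w :: "real^'n::finite"
  assumes "v \<noteq> 0"
  shows "\<exists>S. is_circle S \<and> (\<forall>t. ((norm v)^2 / (norm (v + t *\<^sub>R w))^2 * t) *\<^sub>R (v + t *\<^sub>R w) \<in> S)"
proof -
  define A where "A = norm v"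
  define vh where "vh = (1 / A) *\<^sub>R v"
  define b where "b = w \<bullet> vh"
  define wp where "wp = w - b *\<^sub>R vh"
  define d where "d = norm wp"
  have A0: "A > 0" unfolding A_def using assms by simp
  have v_eq: "v = A *\<^sub>R vh" unfolding vh_def using A0 by simp
  have nvh: "norm vh = 1" unfolding vh_def A_def using assms by simp
  have vhvh: "vh \<bullet> vh = 1" using nvh by (simp add: norm_eq_1)
  have wpvh: "wp \<bullet> vh = 0" unfolding wp_def b_def by (simp add: inner_diff_left vhvh)
  show ?thesis
  proof (cases "d = 0")
    case True
    then have w_eq: "w = (b / A) *\<^sub>R v" unfolding d_def wp_def v_eq using A0 by simp
    define S where "S = {0 + t *\<^sub>R v | t. True}"
    have "is_circle S" unfolding is_circle_def S_def using assms by blast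
    moreover have "((norm v)^2 / (norm (v + t *\<^sub>R w))^2 * t) *\<^sub>R (v + t *\<^sub>R w) \<in> S" for t
    proof -
      have "((norm v)^2 / (norm (v + t *\<^sub>R w))^2 * t) *\<^sub>R (v + t *\<^sub>R w)
          = (((norm v)^2 / (norm (v + t *\<^sub>R w))^2 * t) * (1 + t * (b / A))) *\<^sub>R v"
      proof -
        have "K *\<^sub>R (v + t *\<^sub>R (c *\<^sub>R v)) = (K * (1 + t * c)) *\<^sub>R v" for K c
          by (simp add: algebra_simps)
        then show ?thesis unfolding w_eq by blast
      qed
      then show ?thesis unfolding S_def by auto
    qed
    ultimately show ?thesis by blast
  next
    case False
    then have d0: "d > 0" unfolding d_def by simp
    define wh where "wh = (1 / d) *\<^sub>R wp"
    have w_eq: "w = b *\<^sub>R vh + d *\<^sub>R wh" unfolding wh_def wp_def using d0 by simp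
    have nwh: "norm wh = 1" unfolding wh_def d_def using d0 d_def by simp
    have whwh: "wh \<bullet> wh = 1" using nwh by (simp add: norm_eq_1)
    have whvh: "wh \<bullet> vh = 0" "vh \<bullet> wh = 0" unfolding wh_def using wpvh by (simp_all add: inner_commute)
    define R where "R = A^2 / (2 * d)"
    have R0: "R > 0" unfolding R_def using A0 d0 by simp
    define S where "S = {R *\<^sub>R wh + (R * cos t) *\<^sub>R (- wh) + (R * sin t) *\<^sub>R vh | t. True}"
    have "is_circle S" unfolding is_circle_def S_def
      apply (rule disjI1)
      apply (rule exI[of _ "R *\<^sub>R wh"], rule exI[of _ "- wh"], rule exI[of _ vh], rule exI[of _ R])
      using nwh nvh whvh R0 by simp
    moreover have "((norm v)^2 / (norm (v + t *\<^sub>R w))^2 * t) *\<^sub>R (v + t *\<^sub>R w) \<in> S" for t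
    proof -
      define X where "X = A + t * b"
      define Y where "Y = t * d"
      define N where "N = X^2 + Y^2"
      have vtw: "v + t *\<^sub>R w = X *\<^sub>R vh + Y *\<^sub>R wh"
        unfolding v_eq w_eq X_def Y_def by (simp add: algebra_simps)
      have nN: "(norm (v + t *\<^sub>R w))^2 = N"
        unfolding vtw N_def power2_norm_eq_inner
        by (simp add: inner_add_left inner_add_right vhvh whwh whvh power2_eq_square)
      have N0: "N > 0"
      proof -
        have "X \<noteq> 0 \<or> Y \<noteq> 0" unfolding X_def Y_def using A0 d0 by auto
        then show ?thesis unfolding N_def by (auto simp: add_pos_nonneg add_nonneg_pos)
      qed
      have "((X^2 - Y^2) / N)^2 + (2 * X * Y / N)^2 = 1"
      proof -
        have "(X^2 - Y^2)^2 + (2 * X * Y)^2 = N^2" unfolding N_def by (simp add: power2_eq_square algebra_simps)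
        then show ?thesis using N0 by (simp add: power_divide add_divide_distrib[symmetric])
      qed
      then obtain \<theta> where c: "(X^2 - Y^2) / N = cos \<theta>" and s: "2 * X * Y / N = sin \<theta>"
        using sincos_total_2pi by metis
      have "((norm v)^2 / (norm (v + t *\<^sub>R w))^2 * t) *\<^sub>R (v + t *\<^sub>R w)
           = (A^2 * t * X / N) *\<^sub>R vh + (A^2 * t * Y / N) *\<^sub>R wh"
        by (simp only: nN, simp add: vtw algebra_simps A_def)
      also have "\<dots> = R *\<^sub>R wh + (R * cos \<theta>) *\<^sub>R (- wh) + (R * sin \<theta>) *\<^sub>R vh"
      proof -
        have e1: "A^2 * t * X / N = R * sin \<theta>" unfolding s[symmetric] R_def Y_def
          using d0 N0 by (simp add: field_simps)
        have h1: "1 - (X^2 - Y^2) / N = 2 * Y^2 / N"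
        proof -
          have "1 - (X^2 - Y^2) / N = (N - (X^2 - Y^2)) / N" using N0 by (simp add: diff_divide_distrib)
          also have "N - (X^2 - Y^2) = 2 * Y^2" unfolding N_def by simp
          finally show ?thesis .
        qed
        have "R - R * cos \<theta> = R * (1 - (X^2 - Y^2) / N)" unfolding c[symmetric] by (simp add: algebra_simps)
        also have "\<dots> = A^2 / (2 * d) * (2 * (t * d)^2 / N)" unfolding h1 by (simp add: R_def Y_def)
        also have "\<dots> = A^2 * t * Y / N" unfolding Y_def using d0 by (simp add: field_simps power2_eq_square)
        finally have e2: "A^2 * t * Y / N = R - R * cos \<theta>" by simp
        show ?thesis unfolding e1 e2 by (simp add: algebra_simps)
      qed
      finally show ?thesis unfolding S_def by blast
    qed
    ultimately show ?thesis by blast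
  qed
qed



lemma smooth_F3:
  fixes f g h :: "_ \<Rightarrow> real^'n::finite"
  assumes "smooth_on U f" "smooth_on U g" "smooth_on U h"
  shows "smooth_on U (\<lambda>x. F3 a (f x) (g x) (h x))"
  unfolding F3_def by (intro smooth_sum smooth_mult smooth_const smooth_nth assms) auto

lemma smooth_QQ:
  fixes g h :: "_ \<Rightarrow> real^'n::finite"
  assumes "smooth_on U g" "smooth_on U h"
  shows "smooth_on U (\<lambda>x. QQ a k (g x) (h x))"
  unfolding QQ_def by (intro smooth_sum smooth_mult smooth_const smooth_nth assms) auto

lemma smooth_id: "smooth_on U (\<lambda>x. x)"
  by (rule smooth_linear) (rule bounded_linear_ident)

lemma quad_real_scale: "quad_real a (t *\<^sub>R x) = t^2 *\<^sub>R quad_real a x"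
  unfolding quad_real_def by (simp add: vec_eq_iff sum_distrib_left power2_eq_square algebra_simps)

lemma quad_real_bound:
  "norm (quad_real a x) \<le> (\<Sum>k\<in>UNIV. \<Sum>i\<in>UNIV. \<Sum>j\<in>UNIV. \<bar>a k i j\<bar>) * (norm x)^2"
proof -
  have "norm (quad_real a x) \<le> (\<Sum>k\<in>UNIV. \<bar>quad_real a x $ k\<bar>)" by (rule norm_le_l1_cart)
  also have "\<dots> \<le> (\<Sum>k\<in>UNIV. (\<Sum>i\<in>UNIV. \<Sum>j\<in>UNIV. \<bar>a k i j\<bar>) * (norm x)^2)"
  proof (rule sum_mono)
    fix k
    have "\<bar>quad_real a x $ k\<bar> \<le> (\<Sum>i\<in>UNIV. \<Sum>j\<in>UNIV. \<bar>a k i j * x$i * x$j\<bar>)"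
      unfolding quad_real_def by (simp, rule order_trans[OF sum_abs], rule sum_mono, rule sum_abs)
    also have "\<dots> \<le> (\<Sum>i\<in>UNIV. \<Sum>j\<in>UNIV. \<bar>a k i j\<bar> * (norm x)^2)"
    proof (intro sum_mono)
      fix i j
      have "\<bar>x$i\<bar> * \<bar>x$j\<bar> \<le> norm x * norm x"
        by (intro mult_mono component_le_norm_cart) auto
      then show "\<bar>a k i j * x$i * x$j\<bar> \<le> \<bar>a k i j\<bar> * (norm x)^2"
        by (simp add: abs_mult power2_eq_square mult.assoc mult_left_mono)
    qed
    also have "\<dots> = (\<Sum>i\<in>UNIV. \<Sum>j\<in>UNIV. \<bar>a k i j\<bar>) * (norm x)^2"
      by (simp add: sum_distrib_right)
    finally show "\<bar>quad_real a x $ k\<bar> \<le> (\<Sum>i\<in>UNIV. \<Sum>j\<in>UNIV. \<bar>a k i j\<bar>) * (norm x)^2" .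
  qed
  also have "\<dots> = (\<Sum>k\<in>UNIV. \<Sum>i\<in>UNIV. \<Sum>j\<in>UNIV. \<bar>a k i j\<bar>) * (norm x)^2"
    by (simp add: sum_distrib_right)
  finally show ?thesis .
qed

lemma deriv_id_from_bound:
  fixes f :: "'a::real_normed_vector \<Rightarrow> 'a"
  assumes "f 0 = 0" and ev: "eventually (\<lambda>x. norm (f x - x) \<le> K * (norm x)^2) (at 0)"
  shows "(f has_derivative id) (at 0)"
proof -
  have "((\<lambda>y. norm (f y - f 0 - id (y - 0)) / norm (y - 0)) \<longlongrightarrow> 0) (at 0)"
  proof (rule tendsto_sandwich[where f="\<lambda>_. 0" and h="\<lambda>y. \<bar>K\<bar> * norm y"])
    show "\<forall>\<^sub>F y in at 0. 0 \<le> norm (f y - f 0 - id (y - 0)) / norm (y - 0)" by simp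
    show "\<forall>\<^sub>F y in at 0. norm (f y - f 0 - id (y - 0)) / norm (y - 0) \<le> \<bar>K\<bar> * norm y"
    proof -
      have ne: "eventually (\<lambda>y. y \<noteq> 0) (at (0::'a))" by (simp add: eventually_at_filter)
      show ?thesis
      proof (rule eventually_mono[OF eventually_conj[OF ev ne]])
        fix y assume H: "norm (f y - y) \<le> K * (norm y)^2 \<and> y \<noteq> 0"
        then have y: "y \<noteq> 0" by simp
        have "norm (f y - y) \<le> \<bar>K\<bar> * norm y * norm y"
          using H by (smt (verit, ccfv_SIG) mult_right_mono norm_ge_zero power2_eq_square abs_ge_self mult.assoc)
        then show "norm (f y - f 0 - id (y - 0)) / norm (y - 0) \<le> \<bar>K\<bar> * norm y"
          using y assms(1) by (simp add: divide_le_eq)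
      qed
    qed
    show "((\<lambda>_. 0) \<longlongrightarrow> (0::real)) (at 0)" by simp
    show "((\<lambda>y. \<bar>K\<bar> * norm y) \<longlongrightarrow> 0) (at 0)"
      by (auto intro!: tendsto_eq_intros)
  qed
  then show ?thesis unfolding has_derivative_iff_norm by (simp add: id_def bounded_linear_ident)
qed



lemma smooth_inner:
  fixes f g :: "_ \<Rightarrow> real^'n::finite"
  assumes "smooth_on U f" "smooth_on U g"
  shows "smooth_on U (\<lambda>x. f x \<bullet> g x)"
  unfolding inner_vec_def inner_real_def by (intro smooth_sum smooth_mult smooth_nth assms) auto

theorem proposition3:
  fixes a :: "'n::finite \<Rightarrow> 'n \<Rightarrow> 'n \<Rightarrow> real"
  assumes "\<forall>x::complex^'n. cbil x x = 0 \<longrightarrow>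
             cbil x (quad_complex a x) = 0 \<and> cbil (quad_complex a x) (quad_complex a x) = 0"
  shows "\<exists>(\<Phi>::real^'n \<Rightarrow> real^'n) U V \<Psi>.
           open U \<and> 0 \<in> U \<and> open V \<and> \<Phi> ` U = V \<and>
           smooth_on U \<Phi> \<and> smooth_on V \<Psi> \<and>
           (\<forall>x\<in>U. \<Psi> (\<Phi> x) = x) \<and> (\<forall>y\<in>V. \<Phi> (\<Psi> y) = y) \<and>
           \<Phi> 0 = 0 \<and> (\<Phi> has_derivative id) (at 0) \<and>
           (\<exists>C. eventually (\<lambda>x. norm (\<Phi> x - x - quad_real a x) \<le> C * norm x ^ 3) (at 0)) \<and>
           (\<forall>v::real^'n. v \<noteq> 0 \<longrightarrow>
              (\<exists>e>0. \<exists>S. is_circle S \<and> \<Phi> ` ({t *\<^sub>R v | t. True} \<inter> ball 0 e) \<subseteq> S))"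
proof -
  have H: "hyp a" using assms unfolding hyp_def .
  define m where "m = (undefined :: 'n)"
  define e where "e = (axis m 1 :: real^'n)"
  define uf where "uf x = x - (x$m) *s e" for x :: "real^'n"
  define lam where "lam x = F3 a e e e * x$m + (F3 a e e (uf x) + F3 a e (uf x) e + F3 a (uf x) e e)" for x
  define qf where "qf x = (x \<bullet> x) * (\<Sum>k\<in>UNIV. (QQ a k e e)^2)
      + (\<Sum>k\<in>UNIV. (QQ a k e (uf x) + QQ a k (uf x) e)^2)
      + 2 * x$m * (\<Sum>k\<in>UNIV. QQ a k e e * (QQ a k e (uf x) + QQ a k (uf x) e))
      + 2 * (\<Sum>k\<in>UNIV. QQ a k e e * QQ a k (uf x) (uf x))
      - 2 * (uf x \<bullet> uf x) * (\<Sum>k\<in>UNIV. (QQ a k e e)^2)" for x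
  define \<Gamma> where "\<Gamma> = quad_real a"
  define W where "W x = \<Gamma> x - (2 * lam x) *\<^sub>R x" for x
  define E where "E x = 1 - 2 * lam x + qf x" for x
  define \<Phi> where "\<Phi> x = inverse (E x) *\<^sub>R (x + W x)" for x
  have I1: "x \<bullet> \<Gamma> x = (x \<bullet> x) * lam x" for x
    using K1[OF H, of x m] by (simp add: \<Gamma>_def inner_quad_real lam_def uf_def e_def)
  have I2: "\<Gamma> x \<bullet> \<Gamma> x = (x \<bullet> x) * qf x" for x
    using K2[OF H, of x m] norm_quad_real[of a x]
    by (simp add: \<Gamma>_def qf_def uf_def e_def power2_norm_eq_inner)
  have I3: "(x \<bullet> x) * E x = (x + W x) \<bullet> (x + W x)" for x
  proof -
    have "(x + W x) \<bullet> (x + W x) = x \<bullet> x + 2 * (x \<bullet> \<Gamma> x) - 4 * lam x * (x \<bullet> x)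
          + \<Gamma> x \<bullet> \<Gamma> x - 4 * lam x * (x \<bullet> \<Gamma> x) + 4 * (lam x)^2 * (x \<bullet> x)"
      unfolding W_def by (simp add: inner_add_left inner_add_right inner_diff_left inner_diff_right
          inner_commute power2_eq_square algebra_simps)
    also have "\<dots> = (x \<bullet> x) * E x" unfolding I1 I2 E_def by (simp add: power2_eq_square algebra_simps)
    finally show ?thesis by simp
  qed
  have sm_uf: "smooth_on U uf" for U
    unfolding uf_def scalar_mult_eq_scaleR
    by (intro smooth_diff smooth_id smooth_scaleR smooth_coord smooth_const)
  have sm_lam: "smooth_on U lam" for U
    unfolding lam_def
    by (intro smooth_add smooth_mult smooth_const smooth_coord smooth_F3 sm_uf)
  have sm_qf: "smooth_on U qf" for U
    unfolding qf_def
    by (intro smooth_add smooth_diff smooth_mult smooth_const smooth_coord smooth_QQ sm_uf smooth_sum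
        smooth_inner smooth_id) (auto simp: power2_eq_square intro!: smooth_mult smooth_add smooth_QQ sm_uf smooth_const)
  have sm_E: "smooth_on U E" for U
    unfolding E_def by (intro smooth_add smooth_diff smooth_mult smooth_const sm_lam sm_qf)
  have \<Gamma>_eq: "\<Gamma> = (\<lambda>x. \<chi> k. QQ a k x x)"
    unfolding \<Gamma>_def by (rule ext) (simp add: vec_eq_iff quad_real_nth)
  have sm_\<Gamma>: "smooth_on U \<Gamma>" for U
    unfolding \<Gamma>_eq by (intro smooth_vec smooth_QQ smooth_id)
  have sm_W: "smooth_on U W" for U
    unfolding W_def by (intro smooth_diff sm_\<Gamma> smooth_scaleR smooth_mult smooth_const sm_lam smooth_id)
  define U0 where "U0 = {x. 0 < E x}"
  have sm_\<Phi>: "smooth_on U0 \<Phi>"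
    unfolding \<Phi>_def
    by (intro smooth_scaleR smooth_inverse sm_E smooth_add smooth_id sm_W) (auto simp: U0_def)
  have openU0: "open U0"
    unfolding U0_def
    by (rule open_Collect_less) (auto intro: smooth_continuous sm_E)
  have uf0: "uf 0 = 0" unfolding uf_def by simp
  have lam0: "lam 0 = 0" unfolding lam_def uf0 by (simp add: F3_zero)
  have qf0: "qf 0 = 0" unfolding qf_def uf0 by (simp add: QQ_zero)
  have \<Gamma>0: "\<Gamma> 0 = 0" unfolding \<Gamma>_def quad_real_def by (simp add: vec_eq_iff)
  have E0: "E 0 = 1" unfolding E_def lam0 qf0 by simp
  have U00: "0 \<in> U0" by (simp add: U0_def E0)
  have \<Phi>0: "\<Phi> 0 = 0" unfolding \<Phi>_def W_def \<Gamma>0 by simp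
  define cG where "cG = (\<Sum>k\<in>UNIV. \<Sum>i\<in>UNIV. \<Sum>j\<in>UNIV. \<bar>a k i j\<bar>)"
  have cG0: "0 \<le> cG" unfolding cG_def by (intro sum_nonneg) auto
  have b\<Gamma>: "norm (\<Gamma> x) \<le> cG * (norm x)^2" for x unfolding \<Gamma>_def cG_def by (rule quad_real_bound)
  have xx: "x \<bullet> x = (norm x)^2" for x :: "real^'n" by (simp add: power2_norm_eq_inner)
  have blam: "\<bar>lam x\<bar> \<le> cG * norm x" for x
  proof (cases "x = 0")
    case True then show ?thesis by (simp add: lam0)
  next
    case False
    then have n0: "(norm x)^2 > 0" by simp
    have "\<bar>x \<bullet> \<Gamma> x\<bar> = \<bar>x \<bullet> x\<bar> * \<bar>lam x\<bar>" unfolding I1 by (rule abs_mult)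
    also have "\<bar>x \<bullet> x\<bar> = (norm x)^2" by (simp only: xx abs_power2 abs_norm_cancel)
    finally have h1: "(norm x)^2 * \<bar>lam x\<bar> = \<bar>x \<bullet> \<Gamma> x\<bar>" by simp
    have "(norm x)^2 * \<bar>lam x\<bar> \<le> norm x * norm (\<Gamma> x)" unfolding h1 by (rule Cauchy_Schwarz_ineq2)
    also have "\<dots> \<le> norm x * (cG * (norm x)^2)" by (rule mult_left_mono[OF b\<Gamma>]) simp
    also have "\<dots> = (norm x)^2 * (cG * norm x)" by (simp add: power2_eq_square algebra_simps)
    finally show ?thesis by (rule mult_left_le_imp_le) (rule n0)
  qed
  have bq: "0 \<le> qf x \<and> qf x \<le> cG^2 * (norm x)^2" for x
  proof (cases "x = 0")
    case True then show ?thesis by (simp add: qf0)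
  next
    case False
    then have n0: "(norm x)^2 > 0" by simp
    have e: "(norm x)^2 * qf x = (norm (\<Gamma> x))^2"
      unfolding xx[symmetric] I2[symmetric] by (rule refl)
    have "(norm x)^2 * 0 \<le> (norm x)^2 * qf x" unfolding e by simp
    then have q0: "0 \<le> qf x" by (rule mult_left_le_imp_le) (rule n0)
    have "(norm (\<Gamma> x))^2 \<le> (cG * (norm x)^2)^2" using b\<Gamma> by (intro power_mono) auto
    also have "\<dots> = (norm x)^2 * (cG^2 * (norm x)^2)" by (simp add: power2_eq_square algebra_simps)
    finally have "(norm x)^2 * qf x \<le> (norm x)^2 * (cG^2 * (norm x)^2)" unfolding e .
    then have "qf x \<le> cG^2 * (norm x)^2" by (rule mult_left_le_imp_le) (rule n0)
    then show ?thesis using q0 by simp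
  qed
  define \<delta> where "\<delta> = 1 / (4 * cG + 1)"
  have \<delta>0: "0 < \<delta>" "\<delta> \<le> 1" using cG0 by (auto simp: \<delta>_def)
  have Ebig: "E x \<ge> 1/2" if "norm x \<le> \<delta>" for x
  proof -
    have "cG * norm x \<le> cG * \<delta>" using that cG0 by (simp add: mult_left_mono)
    also have "2 * (cG * \<delta>) \<le> 1/2" using cG0 by (simp add: \<delta>_def field_simps)
    then have "cG * \<delta> \<le> 1/4" by simp
    finally have "\<bar>lam x\<bar> \<le> 1/4" using blam[of x] by linarith
    then show ?thesis using bq[of x] unfolding E_def by linarith
  qed
  define C where "C = 2 * (3 * cG^2 + cG^3)"
  have C0: "0 \<le> C" unfolding C_def using cG0 by simp
  have mainb: "norm (\<Phi> x - x - \<Gamma> x) \<le> C * (norm x)^3" if nx: "norm x \<le> \<delta>" for x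
  proof -
    define n where "n = norm x"
    have n1: "n \<le> 1" "0 \<le> n" using nx \<delta>0 unfolding n_def by auto
    have E1: "E x \<ge> 1/2" using Ebig nx .
    then have Ene: "E x \<noteq> 0" by auto
    have "E x *\<^sub>R (\<Phi> x - x - \<Gamma> x) = (x + W x) - E x *\<^sub>R (x + \<Gamma> x)"
      using Ene by (simp add: \<Phi>_def scaleR_diff_right scaleR_add_right)
    also have "\<dots> = (2 * lam x) *\<^sub>R \<Gamma> x - qf x *\<^sub>R x - qf x *\<^sub>R \<Gamma> x"
      by (simp add: W_def E_def algebra_simps)
    finally have r0: "E x *\<^sub>R (\<Phi> x - x - \<Gamma> x) = (2 * lam x) *\<^sub>R \<Gamma> x - qf x *\<^sub>R x - qf x *\<^sub>R \<Gamma> x" .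
    have rep: "\<Phi> x - x - \<Gamma> x = inverse (E x) *\<^sub>R ((2 * lam x) *\<^sub>R \<Gamma> x - qf x *\<^sub>R x - qf x *\<^sub>R \<Gamma> x)"
      unfolding r0[symmetric] using Ene by simp
    have t1: "norm ((2 * lam x) *\<^sub>R \<Gamma> x) \<le> 2 * cG^2 * n^3"
    proof -
      have "norm ((2 * lam x) *\<^sub>R \<Gamma> x) = 2 * (\<bar>lam x\<bar> * norm (\<Gamma> x))" by (simp add: abs_mult)
      also have "\<dots> \<le> 2 * ((cG * n) * (cG * n^2))"
        using mult_mono[OF blam[of x] b\<Gamma>[of x]] cG0 unfolding n_def by simp
      also have "\<dots> = 2 * cG^2 * n^3" by (simp add: power2_eq_square power3_eq_cube)
      finally show ?thesis .
    qed
    have t2: "norm (qf x *\<^sub>R x) \<le> cG^2 * n^3"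
    proof -
      have "norm (qf x *\<^sub>R x) = qf x * n" using bq[of x] unfolding n_def by simp
      also have "\<dots> \<le> (cG^2 * n^2) * n" using bq[of x] n1 unfolding n_def by (intro mult_right_mono) auto
      also have "\<dots> = cG^2 * n^3" by (simp add: power2_eq_square power3_eq_cube)
      finally show ?thesis .
    qed
    have t3: "norm (qf x *\<^sub>R \<Gamma> x) \<le> cG^3 * n^3"
    proof -
      have "norm (qf x *\<^sub>R \<Gamma> x) = qf x * norm (\<Gamma> x)" using bq[of x] by simp
      also have "\<dots> \<le> (cG^2 * n^2) * (cG * n^2)"
        using mult_mono[OF conjunct2[OF bq[of x]] b\<Gamma>[of x]] cG0 unfolding n_def by simp
      also have "\<dots> = cG^3 * (n^3 * n)" by (simp add: power2_eq_square power3_eq_cube)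
      also have "\<dots> \<le> cG^3 * (n^3 * 1)" using n1 cG0 by (intro mult_left_mono) auto
      finally show ?thesis by simp
    qed
    have "norm ((2 * lam x) *\<^sub>R \<Gamma> x - qf x *\<^sub>R x - qf x *\<^sub>R \<Gamma> x)
        \<le> norm ((2 * lam x) *\<^sub>R \<Gamma> x) + norm (qf x *\<^sub>R x) + norm (qf x *\<^sub>R \<Gamma> x)"
      by (meson norm_triangle_ineq4 add_right_mono order_trans)
    also have "\<dots> \<le> (3 * cG^2 + cG^3) * n^3" using t1 t2 t3 by (simp add: algebra_simps)
    finally have tt: "norm ((2 * lam x) *\<^sub>R \<Gamma> x - qf x *\<^sub>R x - qf x *\<^sub>R \<Gamma> x) \<le> (3 * cG^2 + cG^3) * n^3" .
    have "inverse (E x) \<le> inverse (1/2::real)" by (rule le_imp_inverse_le[OF E1]) simp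
    then have iE: "inverse (E x) \<le> 2" "0 \<le> inverse (E x)" using E1 by auto
    have "norm (\<Phi> x - x - \<Gamma> x) = inverse (E x) * norm ((2 * lam x) *\<^sub>R \<Gamma> x - qf x *\<^sub>R x - qf x *\<^sub>R \<Gamma> x)"
      unfolding rep using iE by simp
    also have "\<dots> \<le> 2 * ((3 * cG^2 + cG^3) * n^3)"
      using mult_mono[OF iE(1) tt] by simp
    also have "\<dots> = C * (norm x)^3" unfolding C_def n_def by (simp add: algebra_simps)
    finally show ?thesis .
  qed
  have ev\<delta>: "eventually (\<lambda>x. norm x \<le> \<delta>) (at (0::real^'n))"
    unfolding eventually_at by (rule exI[of _ \<delta>]) (auto simp: \<delta>0 dist_norm)
  have evC: "eventually (\<lambda>x. norm (\<Phi> x - x - quad_real a x) \<le> C * norm x ^ 3) (at 0)"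
    using eventually_mono[OF ev\<delta> mainb] unfolding \<Gamma>_def by simp
  have der0: "(\<Phi> has_derivative id) (at 0)"
  proof (rule deriv_id_from_bound[where f=\<Phi> and K="C + cG", OF \<Phi>0])
    show "eventually (\<lambda>x. norm (\<Phi> x - x) \<le> (C + cG) * (norm x)^2) (at 0)"
    proof (rule eventually_mono[OF ev\<delta>])
      fix x :: "real^'n" assume nx: "norm x \<le> \<delta>"
      have n1: "norm x \<le> 1" using nx \<delta>0 by simp
      have "norm (\<Phi> x - x) \<le> norm (\<Phi> x - x - \<Gamma> x) + norm (\<Gamma> x)"
        using norm_triangle_ineq[of "\<Phi> x - x - \<Gamma> x" "\<Gamma> x"] by simp
      also have "\<dots> \<le> C * (norm x)^3 + cG * (norm x)^2" using mainb[OF nx] b\<Gamma>[of x] by simp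
      also have "C * (norm x)^3 \<le> C * (norm x)^2"
        using n1 C0 by (intro mult_left_mono) (auto simp: power_decreasing)
      finally show "norm (\<Phi> x - x) \<le> (C + cG) * (norm x)^2" by (simp add: algebra_simps)
    qed
  qed
  obtain \<Phi>' where \<Phi>'d: "\<forall>x\<in>U0. (\<Phi> has_derivative \<Phi>' x) (at x)"
      and \<Phi>'s: "\<forall>v. smooth_on U0 (\<lambda>x. \<Phi>' x v)"
    using smooth_D[OF sm_\<Phi>] by blast
  have bl: "bounded_linear (\<Phi>' x)" if "x \<in> U0" for x
    using \<Phi>'d that has_derivative_bounded_linear by blast
  have \<Phi>'0: "\<Phi>' 0 = id" using has_derivative_unique[OF \<Phi>'d[rule_format, OF U00] der0] .
  define f' where "f' x = Blinfun (\<Phi>' x)" for x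
  have f'app: "blinfun_apply (f' x) = \<Phi>' x" if "x \<in> U0" for x
    unfolding f'_def using bl[OF that] by (rule bounded_linear_Blinfun_apply)
  have derf: "(\<Phi> has_derivative blinfun_apply (f' x)) (at x)" if "x \<in> U0" for x
    using \<Phi>'d that f'app[OF that] by simp
  have contf: "continuous_on U0 f'"
  proof (rule continuous_on_blinfun_componentwise)
    fix i :: "real^'n"
    have c: "continuous_on U0 (\<lambda>x. \<Phi>' x i)" by (rule smooth_continuous) (use \<Phi>'s in blast)
    have "continuous_on U0 (\<lambda>x. blinfun_apply (f' x) i) = continuous_on U0 (\<lambda>x. \<Phi>' x i)"
      by (rule continuous_on_cong) (auto simp: f'app)
    then show "continuous_on U0 (\<lambda>x. blinfun_apply (f' x) i)" using c by simp
  qed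
  have invf: "id_blinfun o\<^sub>L f' 0 = id_blinfun"
    by (rule blinfun_eqI) (simp add: f'app[OF U00] \<Phi>'0)
  obtain U' V g g' where IFT: "open U'" "U' \<subseteq> U0" "0 \<in> U'" "open V" "\<Phi> 0 \<in> V"
      "homeomorphism U' V \<Phi> g"
      "\<And>y. y \<in> V \<Longrightarrow> (g has_derivative (g' y)) (at y)"
      "\<And>y. y \<in> V \<Longrightarrow> g' y = inv (blinfun_apply (f' (g y)))"
      "\<And>y. y \<in> V \<Longrightarrow> bij (blinfun_apply (f' (g y)))"
    by (rule inverse_function_theorem[OF openU0 derf contf U00 invf]) blast+
  have hom: "\<forall>x\<in>U'. g (\<Phi> x) = x" "\<Phi> ` U' = V" "\<forall>y\<in>V. \<Phi> (g y) = y" "g ` V = U'"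
    using IFT(6) unfolding homeomorphism_def by auto
  have gU: "g y \<in> U'" if "y \<in> V" for y using hom(4) that by blast
  have gU0: "g y \<in> U0" if "y \<in> V" for y using gU[OF that] IFT(2) by blast
  have bij': "bij (\<Phi>' (g y))" if "y \<in> V" for y using IFT(9)[OF that] f'app[OF gU0[OF that]] by simp
  have sm_g: "smooth_on V g"
  proof (rule smooth_inv_map[OF smooth_subset[OF sm_\<Phi> IFT(2)] IFT(1) IFT(4)])
    show "\<And>x. x \<in> U' \<Longrightarrow> (\<Phi> has_derivative \<Phi>' x) (at x)" using \<Phi>'d IFT(2) by blast
    show "\<And>v. smooth_on U' (\<lambda>x. \<Phi>' x v)" using \<Phi>'s IFT(2) smooth_subset by blast
    show "inj (\<Phi>' x)" if "x \<in> U'" for x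
    proof -
      have "\<Phi> x \<in> V" using hom(2) that by blast
      moreover have "g (\<Phi> x) = x" using hom(1) that by blast
      ultimately show ?thesis using bij'[of "\<Phi> x"] bij_is_inj by metis
    qed
    show "\<And>y. y \<in> V \<Longrightarrow> g y \<in> U'" by (rule gU)
    show "\<And>y. y \<in> V \<Longrightarrow> (g has_derivative g' y) (at y)" by (rule IFT(7))
    show "\<Phi>' (g y) (g' y w) = w" if "y \<in> V" for y w
      using IFT(8)[OF that] f'app[OF gU0[OF that]] bij'[OF that]
      by (simp add: bij_is_surj surj_f_inv_f)
  qed
  have \<Phi>line: "\<Phi> (t *\<^sub>R v) = ((norm v)^2 / (norm (v + t *\<^sub>R W v))^2 * t) *\<^sub>R (v + t *\<^sub>R W v)"
    if v0: "v \<noteq> 0" for t v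
  proof (cases "t = 0")
    case True then show ?thesis by (simp add: \<Phi>0)
  next
    case False
    define x where "x = t *\<^sub>R v"
    have vv: "v \<bullet> v \<noteq> 0" using v0 by simp
    have xx2: "x \<bullet> x = t^2 * (v \<bullet> v)" unfolding x_def by (simp add: power2_eq_square)
    have \<Gamma>x: "\<Gamma> x = t^2 *\<^sub>R \<Gamma> v" unfolding x_def \<Gamma>_def by (rule quad_real_scale)
    have "t^2 * (v \<bullet> v) * lam x = t^2 * (v \<bullet> v) * (t * lam v)"
    proof -
      have "t^2 * (v \<bullet> v) * lam x = x \<bullet> \<Gamma> x" using I1[of x] xx2 by simp
      also have "\<dots> = x \<bullet> (t^2 *\<^sub>R \<Gamma> v)" by (simp only: \<Gamma>x)
      also have "\<dots> = t^3 * (v \<bullet> \<Gamma> v)" unfolding x_def by (simp add: power2_eq_square power3_eq_cube)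
      also have "\<dots> = t^2 * (v \<bullet> v) * (t * lam v)" unfolding I1 by (simp add: power2_eq_square power3_eq_cube)
      finally show ?thesis .
    qed
    then have lamx: "lam x = t * lam v" using False vv by simp
    have Wx: "x + W x = t *\<^sub>R (v + t *\<^sub>R W v)"
      unfolding W_def lamx \<Gamma>x unfolding x_def by (simp add: algebra_simps power2_eq_square)
    have "t^2 * (v \<bullet> v) * E x = t^2 * ((v + t *\<^sub>R W v) \<bullet> (v + t *\<^sub>R W v))"
      using I3[of x] unfolding xx2 Wx by (simp add: power2_eq_square)
    then have Ex: "E x = (norm (v + t *\<^sub>R W v))^2 / (norm v)^2"
      using False vv by (simp add: power2_norm_eq_inner field_simps)
    show ?thesis
      unfolding x_def[symmetric] \<Phi>_def Wx Ex by (simp add: inverse_divide)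
  qed
  show ?thesis
  proof (rule exI[of _ \<Phi>], rule exI[of _ U'], rule exI[of _ V], rule exI[of _ g], intro conjI)
    show "open U'" by (fact IFT(1))
    show "0 \<in> U'" by (fact IFT(3))
    show "open V" by (fact IFT(4))
    show "\<Phi> ` U' = V" by (fact hom(2))
    show "smooth_on U' \<Phi>" by (rule smooth_subset[OF sm_\<Phi> IFT(2)])
    show "smooth_on V g" by (rule sm_g)
    show "\<forall>x\<in>U'. g (\<Phi> x) = x" by (fact hom(1))
    show "\<forall>y\<in>V. \<Phi> (g y) = y" by (fact hom(3))
    show "\<Phi> 0 = 0" by (rule \<Phi>0)
    show "(\<Phi> has_derivative id) (at 0)" by (rule der0)
    show "\<exists>C. \<forall>\<^sub>F x in at 0. norm (\<Phi> x - x - quad_real a x) \<le> C * norm x ^ 3" using evC by blast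
    show "\<forall>v. v \<noteq> 0 \<longrightarrow> (\<exists>e>0. \<exists>S. is_circle S \<and> \<Phi> ` ({t *\<^sub>R v |t. True} \<inter> ball 0 e) \<subseteq> S)"
    proof (intro allI impI)
      fix v :: "real^'n" assume v0: "v \<noteq> 0"
      obtain S where S: "is_circle S"
        "\<forall>t. ((norm v)^2 / (norm (v + t *\<^sub>R W v))^2 * t) *\<^sub>R (v + t *\<^sub>R W v) \<in> S"
        using circle_lemma[OF v0, of "W v"] by blast
      have "\<Phi> ` ({t *\<^sub>R v |t. True} \<inter> ball 0 1) \<subseteq> S"
        using S(2) \<Phi>line[OF v0] by auto
      then show "\<exists>e>0. \<exists>S. is_circle S \<and> \<Phi> ` ({t *\<^sub>R v |t. True} \<inter> ball 0 e) \<subseteq> S"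
        using S(1) by (intro exI[of _ 1] exI[of _ S]) auto
    qed
  qed
qed

end
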